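(* Let $\mathbf{p}$ be a piece-wise order reversing pair on a finite alphabet $\mathcal{A}$ whose order reversing blocks consist of exactly $N_1$ $1$-blocks, $N_2$ $2$-blocks, $N_4$ $4$-blocks and $N_5$ $5$-blocks (and no blocks of other sizes). Then $$\mathrm{ARF}(\mathbf{p})=2^{N_1+2N_2+4N_4+5N_5+1}+(-1)^{N_4+N_5}\,2^{N_1+N_2+2N_4+3N_5}.$$
   Context: Let $n=\#\mathcal{A}\ge2$. A pair is $\mathbf{p}=(p_0,p_1)$ with $p_0,p_1:\mathcal{A}\to\{1,\dots,n\}$ bijections. Standard: $p_0^{-1}(1)=p_1^{-1}(n)$ and $p_1^{-1}(1)=p_0^{-1}(n)$. A standard pair is piece-wise order reversing if there are $2=k_0<\dots<k_\ell=n$ with $B_i=p_0^{-1}\{k_{i-1},\dots,k_i-1\}=p_1^{-1}\{k_{i-1},\dots,k_i-1\}$ and $p_0(b)+p_1(b)=k_{i-1}+k_i-1$ for $b\in B_i$; the $B_i$ are the order reversing blocks, and a block with $k$ letters is a $k$-block. Quadratic form: $\mathcal{Q}_{\mathbf{p}}(v)=\sum_{a\in\mathcal{A}}v_a^2+\sum_{\{a,b\}}L_{\mathbf{p}}(a,b)v_av_b\pmod 2$ for $v\in\mathbb{Z}_2^{\mathcal{A}}$, the second sum over unordered pairs of distinct letters, where $L_{\mathbf{p}}(a,b)=1$ if $(p_0(a)-p_0(b))(p_1(a)-p_1(b))<0$ and $0$ otherwise. $\mathrm{ARF}(\mathbf{p})=\#\{v\in\mathbb{Z}_2^{\mathcal{A}}:\mathcal{Q}_{\mathbf{p}}(v)=1\}$.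 *)

theory Defs
  imports Main
begin

definition is_pair :: "'a set \<Rightarrow> ('a \<Rightarrow> nat) \<Rightarrow> ('a \<Rightarrow> nat) \<Rightarrow> bool" where
  "is_pair A p0 p1 \<longleftrightarrow> finite A \<and> card A \<ge> 2 \<and>
     bij_betw p0 A {1..card A} \<and> bij_betw p1 A {1..card A}"

definition is_standard :: "'a set \<Rightarrow> ('a \<Rightarrow> nat) \<Rightarrow> ('a \<Rightarrow> nat) \<Rightarrow> bool" where
  "is_standard A p0 p1 \<longleftrightarrow> is_pair A p0 p1 \<and>
     inv_into A p0 1 = inv_into A p1 (card A) \<and>
     inv_into A p1 1 = inv_into A p0 (card A)"

definition block :: "'a set \<Rightarrow> ('a \<Rightarrow> nat) \<Rightarrow> nat list \<Rightarrow> nat \<Rightarrow> 'a set" where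
  "block A p ks i = {a \<in> A. ks ! (i - 1) \<le> p a \<and> p a < ks ! i}"

definition por_cuts :: "'a set \<Rightarrow> ('a \<Rightarrow> nat) \<Rightarrow> ('a \<Rightarrow> nat) \<Rightarrow> nat list \<Rightarrow> bool" where
  "por_cuts A p0 p1 ks \<longleftrightarrow> is_standard A p0 p1 \<and> ks \<noteq> [] \<and>
     hd ks = 2 \<and> last ks = card A \<and> sorted_wrt (<) ks \<and>
     (\<forall>i \<in> {1..<length ks}.
        block A p0 ks i = block A p1 ks i \<and>
        (\<forall>b \<in> block A p0 ks i. p0 b + p1 b = ks ! (i - 1) + ks ! i - 1))"

definition piecewise_order_reversing :: "'a set \<Rightarrow> ('a \<Rightarrow> nat) \<Rightarrow> ('a \<Rightarrow> nat) \<Rightarrow> bool" where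
  "piecewise_order_reversing A p0 p1 \<longleftrightarrow> (\<exists>ks. por_cuts A p0 p1 ks)"

definition num_blocks :: "nat list \<Rightarrow> nat \<Rightarrow> nat" where
  "num_blocks ks k = card {i \<in> {1..<length ks}. ks ! i - ks ! (i - 1) = k}"

definition Lp :: "('a \<Rightarrow> nat) \<Rightarrow> ('a \<Rightarrow> nat) \<Rightarrow> 'a \<Rightarrow> 'a \<Rightarrow> nat" where
  "Lp p0 p1 a b = (if (int (p0 a) - int (p0 b)) * (int (p1 a) - int (p1 b)) < 0 then 1 else 0)"

definition Z2vecs :: "'a set \<Rightarrow> ('a \<Rightarrow> nat) set" where
  "Z2vecs A = {v. (\<forall>a \<in> A. v a \<in> {0, 1}) \<and> (\<forall>a. a \<notin> A \<longrightarrow> v a = 0)}"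

text \<open>Quadratic form mod 2; unordered pairs of distinct letters enumerated via a linear order.\<close>
definition Qp :: "'a::linorder set \<Rightarrow> ('a \<Rightarrow> nat) \<Rightarrow> ('a \<Rightarrow> nat) \<Rightarrow> ('a \<Rightarrow> nat) \<Rightarrow> nat" where
  "Qp A p0 p1 v = ((\<Sum>a\<in>A. (v a)^2) +
     (\<Sum>(a,b) \<in> {(a,b). a \<in> A \<and> b \<in> A \<and> a < b}. Lp p0 p1 a b * v a * v b)) mod 2"

definition ARF :: "'a::linorder set \<Rightarrow> ('a \<Rightarrow> nat) \<Rightarrow> ('a \<Rightarrow> nat) \<Rightarrow> nat" where
  "ARF A p0 p1 = card {v \<in> Z2vecs A. Qp A p0 p1 v = 1}"

end

theory Submission
  imports Defs
begin


definition R :: "('a::linorder \<Rightarrow> 'a \<Rightarrow> nat) \<Rightarrow> 'a set \<Rightarrow> ('a \<Rightarrow> nat) \<Rightarrow> nat" where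
  "R E S v = (\<Sum>a\<in>S. (v a)^2) + (\<Sum>(a,b) \<in> {(a,b). a \<in> S \<and> b \<in> S \<and> a < b}. E a b * v a * v b)"

definition R' :: "('a::linorder \<Rightarrow> 'a \<Rightarrow> nat) \<Rightarrow> 'a set \<Rightarrow> ('a \<Rightarrow> nat) \<Rightarrow> nat" where
  "R' E S v = R E S v + sum v S"

lemma Z2_empty: "Z2vecs {} = {\<lambda>_. 0}"
  by (auto simp: Z2vecs_def)

lemma Z2_zero: "v \<in> Z2vecs A \<Longrightarrow> a \<notin> A \<Longrightarrow> v a = 0"
  by (auto simp: Z2vecs_def)

lemma Z2_insert:
  assumes "a \<notin> A"
  shows "Z2vecs (insert a A) = Z2vecs A \<union> (\<lambda>v. v(a:=1)) ` Z2vecs A"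
proof
  show "Z2vecs (insert a A) \<subseteq> Z2vecs A \<union> (\<lambda>v. v(a:=1)) ` Z2vecs A"
  proof
    fix v assume v: "v \<in> Z2vecs (insert a A)"
    show "v \<in> Z2vecs A \<union> (\<lambda>v. v(a:=1)) ` Z2vecs A"
    proof (cases "v a = 0")
      case True
      then have "v \<in> Z2vecs A" using v unfolding Z2vecs_def by (simp, metis)
      then show ?thesis by simp
    next
      case False
      then have "v a = 1" using v by (auto simp: Z2vecs_def)
      then have "v = (v(a:=0))(a:=1)" by auto
      moreover have "v(a:=0) \<in> Z2vecs A" using v by (auto simp: Z2vecs_def)
      ultimately show ?thesis by blast
    qed
  qed
  show "Z2vecs A \<union> (\<lambda>v. v(a:=1)) ` Z2vecs A \<subseteq> Z2vecs (insert a A)"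
    by (auto simp: Z2vecs_def; blast)
qed

lemma Z2_finite: "finite A \<Longrightarrow> finite (Z2vecs A)"
  by (induction A rule: finite_induct) (auto simp: Z2_empty Z2_insert)

lemma Z2_sum_insert:
  assumes "finite A" "a \<notin> A"
  shows "(\<Sum>v\<in>Z2vecs (insert a A). f v) = (\<Sum>v\<in>Z2vecs A. f v + f (v(a:=1)))"
proof -
  have inj: "inj_on (\<lambda>v. v(a:=1)) (Z2vecs A)"
  proof (rule inj_onI)
    fix v w assume "v \<in> Z2vecs A" "w \<in> Z2vecs A" "v(a:=1) = w(a:=1)"
    moreover have "v a = 0" "w a = 0" using Z2_zero assms calculation by metis+
    ultimately show "v = w" by (metis fun_upd_triv fun_upd_upd)
  qed
  have disj: "Z2vecs A \<inter> (\<lambda>v. v(a:=1)) ` Z2vecs A = {}"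
    using Z2_zero[OF _ assms(2)] by fastforce
  have fin: "finite (Z2vecs A)" using Z2_finite assms by blast
  have "(\<Sum>v\<in>Z2vecs (insert a A). f v) = (\<Sum>v\<in>Z2vecs A. f v) + (\<Sum>v\<in>(\<lambda>v. v(a:=1)) ` Z2vecs A. f v)"
    unfolding Z2_insert[OF assms(2)] using disj fin by (simp add: sum.union_disjoint)
  also have "(\<Sum>v\<in>(\<lambda>v. v(a:=1)) ` Z2vecs A. f v) = (\<Sum>v\<in>Z2vecs A. f (v(a:=1)))"
    using inj by (simp add: sum.reindex)
  finally show ?thesis by (simp add: sum.distrib)
qed

lemma Z2_card: "finite A \<Longrightarrow> card (Z2vecs A) = 2 ^ card A"
proof (induction A rule: finite_induct)
  case empty
  then show ?case by (simp add: Z2_empty)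
next
  case (insert x F)
  have "card (Z2vecs (insert x F)) = (\<Sum>v\<in>Z2vecs (insert x F). 1)" by simp
  also have "\<dots> = (\<Sum>v\<in>Z2vecs F. 2)" using insert Z2_sum_insert[of F x "\<lambda>_. 1::nat"] by simp
  finally show ?case using insert by simp
qed

lemma Z2_prod:
  fixes f g :: "('a \<Rightarrow> nat) \<Rightarrow> int"
  assumes "finite Y" "finite X" "X \<inter> Y = {}" "\<And>u w. (\<forall>a\<in>X. u a = w a) \<Longrightarrow> f u = f w"
    "\<And>u w. (\<forall>a\<in>Y. u a = w a) \<Longrightarrow> g u = g w"
  shows "(\<Sum>u\<in>Z2vecs (X \<union> Y). f u * g u) = (\<Sum>u\<in>Z2vecs X. f u) * (\<Sum>u\<in>Z2vecs Y. g u)"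
  using assms(1,3,5)
proof (induction Y arbitrary: g rule: finite_induct)
  case empty
  have g0: "\<forall>u. g u = g (\<lambda>_. 0)" using empty.prems by auto
  have "(\<Sum>u\<in>Z2vecs X. f u * g u) = (\<Sum>u\<in>Z2vecs X. f u * g (\<lambda>_. 0))"
    by (rule sum.cong[OF refl]) (metis g0)
  then show ?case by (simp add: Z2_empty sum_distrib_right)
next
  case (insert y Y)
  have yX: "y \<notin> X" "X \<inter> Y = {}" using insert.prems by auto
  define g' where "g' u = g (u(y:=0)) + g (u(y:=1))" for u
  have g'loc: "g' u = g' w" if "\<forall>a\<in>Y. u a = w a" for u w
  proof -
    have "g (u(y:=0)) = g (w(y:=0))" "g (u(y:=1)) = g (w(y:=1))"
      using that by (auto intro!: insert.prems(2))
    then show ?thesis by (simp add: g'_def)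
  qed
  have IH: "(\<Sum>u\<in>Z2vecs (X \<union> Y). f u * g' u) = (\<Sum>u\<in>Z2vecs X. f u) * (\<Sum>u\<in>Z2vecs Y. g' u)"
    using insert.IH[OF yX(2)] g'loc by blast
  have fin: "finite (X \<union> Y)" using insert assms(2) by auto
  have yXY: "y \<notin> X \<union> Y" using yX insert by auto
  have "(\<Sum>u\<in>Z2vecs (X \<union> insert y Y). f u * g u) = (\<Sum>u\<in>Z2vecs (insert y (X \<union> Y)). f u * g u)"
    by simp
  also have "\<dots> = (\<Sum>u\<in>Z2vecs (X \<union> Y). f u * g u + f (u(y:=1)) * g (u(y:=1)))"
    using Z2_sum_insert[OF fin yXY] by blast
  also have "\<dots> = (\<Sum>u\<in>Z2vecs (X \<union> Y). f u * g' u)"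
  proof (rule sum.cong)
    fix u assume u: "u \<in> Z2vecs (X \<union> Y)"
    have "u y = 0" using Z2_zero[OF u yXY] .
    then have "u(y:=0) = u" by auto
    moreover have "f (u(y:=1)) = f u" using yX by (intro assms(4)) auto
    ultimately show "f u * g u + f (u(y:=1)) * g (u(y:=1)) = f u * g' u"
      by (simp add: g'_def algebra_simps)
  qed simp
  also have "\<dots> = (\<Sum>u\<in>Z2vecs X. f u) * (\<Sum>u\<in>Z2vecs Y. g' u)" by (rule IH)
  also have "(\<Sum>u\<in>Z2vecs Y. g' u) = (\<Sum>u\<in>Z2vecs (insert y Y). g u)"
  proof -
    have "(\<Sum>u\<in>Z2vecs (insert y Y). g u) = (\<Sum>u\<in>Z2vecs Y. g u + g (u(y:=1)))"
      using Z2_sum_insert[OF insert(1,2)] by blast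
    also have "\<dots> = (\<Sum>u\<in>Z2vecs Y. g' u)"
    proof (rule sum.cong)
      fix u assume u: "u \<in> Z2vecs Y"
      have "u y = 0" using Z2_zero[OF u insert(2)] .
      then have "u(y:=0) = u" by auto
      then show "g u + g (u(y:=1)) = g' u" by (simp add: g'_def)
    qed simp
    finally show ?thesis by simp
  qed
  finally show ?case .
qed



lemma pair_sum:
  assumes "finite S"
  shows "(\<Sum>(a,b) \<in> {(a,b). a \<in> S \<and> b \<in> S \<and> (a::'a::linorder) < b}. h a b) =
         (\<Sum>a\<in>S. \<Sum>b\<in>S. if a < b then h a b else (0::'b::comm_monoid_add))"
proof -
  have "{(a,b). a \<in> S \<and> b \<in> S \<and> a < b} = {p \<in> S \<times> S. fst p < snd p}" by auto
  then have "(\<Sum>(a,b) \<in> {(a,b). a \<in> S \<and> b \<in> S \<and> a < b}. h a b) =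
     (\<Sum>p\<in>S \<times> S. if fst p < snd p then case_prod h p else 0)"
    using assms by (simp add: sum.inter_filter)
  also have "\<dots> = (\<Sum>a\<in>S. \<Sum>b\<in>S. if a < b then h a b else 0)"
    unfolding sum.cartesian_product by (rule sum.cong) (auto split: prod.splits)
  finally show ?thesis .
qed

lemma R_alt: "finite S \<Longrightarrow> R E S v = (\<Sum>a\<in>S. (v a)^2) +
   (\<Sum>a\<in>S. \<Sum>b\<in>S. if a < b then E a b * v a * v b else 0)"
  unfolding R_def using pair_sum[of S "\<lambda>a b. E a b * v a * v b"] by simp

lemma R_split:
  assumes "finite X" "finite Y" "X \<inter> Y = {}" "\<And>a b. E a b = E b a"
  shows "R E (X \<union> Y) v = R E X v + R E Y v + (\<Sum>a\<in>X. \<Sum>b\<in>Y. E a b * v a * v b)"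
proof -
  define H where "H a b = (if a < b then E a b * v a * v b else 0)" for a b
  have fin: "finite (X \<union> Y)" using assms by auto
  have s1: "(\<Sum>a\<in>X \<union> Y. (v a)^2) = (\<Sum>a\<in>X. (v a)^2) + (\<Sum>a\<in>Y. (v a)^2)"
    using assms by (simp add: sum.union_disjoint)
  have e1: "(\<Sum>a\<in>X \<union> Y. \<Sum>b\<in>X \<union> Y. H a b) =
     (\<Sum>a\<in>X. \<Sum>b\<in>X. H a b) + (\<Sum>a\<in>X. \<Sum>b\<in>Y. H a b) + (\<Sum>a\<in>Y. \<Sum>b\<in>X. H a b) + (\<Sum>a\<in>Y. \<Sum>b\<in>Y. H a b)"
    using assms by (simp add: sum.union_disjoint sum.distrib)
  have e2: "(\<Sum>a\<in>Y. \<Sum>b\<in>X. H a b) = (\<Sum>a\<in>X. \<Sum>b\<in>Y. H b a)"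
    by (rule sum.swap)
  have e3: "(\<Sum>a\<in>X. \<Sum>b\<in>Y. H a b) + (\<Sum>a\<in>X. \<Sum>b\<in>Y. H b a) = (\<Sum>a\<in>X. \<Sum>b\<in>Y. E a b * v a * v b)"
  proof -
    have "H a b + H b a = E a b * v a * v b" if "a \<in> X" "b \<in> Y" for a b
    proof -
      have "a \<noteq> b" using that assms(3) by auto
      then show ?thesis unfolding H_def using assms(4)[of a b] by (auto simp: algebra_simps)
    qed
    then show ?thesis by (simp add: sum.distrib[symmetric])
  qed
  have "(\<Sum>a\<in>X \<union> Y. \<Sum>b\<in>X \<union> Y. H a b) =
     (\<Sum>a\<in>X. \<Sum>b\<in>X. H a b) + (\<Sum>a\<in>Y. \<Sum>b\<in>Y. H a b) + (\<Sum>a\<in>X. \<Sum>b\<in>Y. E a b * v a * v b)"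
    using e1 e2 e3 by (simp add: algebra_simps)
  then show ?thesis using s1 assms fin unfolding R_alt[OF fin] R_alt[OF assms(1)] R_alt[OF assms(2)] H_def
    by simp
qed

lemma R_local: "\<forall>a\<in>S. v a = w a \<Longrightarrow> R E S v = R E S w"
  unfolding R_def by (intro arg_cong2[where f="(+)"] sum.cong) auto

lemma R'_local: "\<forall>a\<in>S. v a = w a \<Longrightarrow> R' E S v = R' E S w"
  unfolding R'_def using R_local[of S v w E] by (simp cong: sum.cong)

lemma R_single: "R E {x} v = (v x)^2"
proof -
  have e: "{(a,b). a \<in> {x} \<and> b \<in> {x} \<and> a < b} = {}" by auto
  show ?thesis unfolding R_def e by simp
qed



lemma R'_split0:
  assumes "finite X" "finite Y" "X \<inter> Y = {}" "\<And>a b. E a b = E b a"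
    "\<forall>a\<in>X. \<forall>b\<in>Y. E a b = 0"
  shows "R' E (X \<union> Y) v = R' E X v + R' E Y v"
proof -
  have "R E (X \<union> Y) v = R E X v + R E Y v" using R_split[OF assms(1-4)] assms(5) by simp
  moreover have "sum v (X \<union> Y) = sum v X + sum v Y" using assms by (simp add: sum.union_disjoint)
  ultimately show ?thesis unfolding R'_def by simp
qed

lemma blocks_prod:
  fixes E :: "'a::linorder \<Rightarrow> 'a \<Rightarrow> nat" and B :: "'i \<Rightarrow> 'a set"
  assumes "finite I" "\<forall>i\<in>I. finite (B i)" "\<forall>i\<in>I. \<forall>j\<in>I. i \<noteq> j \<longrightarrow> B i \<inter> B j = {}"
    "\<forall>i\<in>I. \<forall>j\<in>I. i \<noteq> j \<longrightarrow> (\<forall>a\<in>B i. \<forall>b\<in>B j. E a b = 0)" "\<And>a b. E a b = E b a"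
  shows "(\<Sum>v\<in>Z2vecs (\<Union>i\<in>I. B i). (-1::int)^(R' E (\<Union>i\<in>I. B i) v)) =
         (\<Prod>i\<in>I. \<Sum>v\<in>Z2vecs (B i). (-1::int)^(R' E (B i) v))"
  using assms(1-4)
proof (induction I rule: finite_induct)
  case empty
  then show ?case by (simp add: Z2_empty R'_def R_def)
next
  case (insert j I)
  let ?U = "\<Union>i\<in>I. B i"
  have fU: "finite ?U" using insert by auto
  have fB: "finite (B j)" using insert by auto
  have dis: "B j \<inter> ?U = {}" using insert.prems(2) insert.hyps(2) by fastforce
  have E0: "\<forall>a\<in>B j. \<forall>b\<in>?U. E a b = 0" using insert.prems(3) insert.hyps(2) by fastforce
  have eq: "(\<Union>i\<in>insert j I. B i) = B j \<union> ?U" by simp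
  have "(\<Sum>v\<in>Z2vecs (B j \<union> ?U). (-1::int)^(R' E (B j \<union> ?U) v)) =
        (\<Sum>v\<in>Z2vecs (B j \<union> ?U). (-1::int)^(R' E (B j) v) * (-1::int)^(R' E ?U v))"
    using R'_split0[OF fB fU dis assms(5) E0] by (simp add: power_add)
  also have "\<dots> = (\<Sum>v\<in>Z2vecs (B j). (-1::int)^(R' E (B j) v)) * (\<Sum>v\<in>Z2vecs ?U. (-1::int)^(R' E ?U v))"
    by (rule Z2_prod[OF fU fB dis]) (metis R'_local, metis (no_types, lifting) R'_local)
  also have "(\<Sum>v\<in>Z2vecs ?U. (-1::int)^(R' E ?U v)) = (\<Prod>i\<in>I. \<Sum>v\<in>Z2vecs (B i). (-1::int)^(R' E (B i) v))"
    using insert by auto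
  finally show ?case using insert eq by simp
qed

fun tw :: "nat \<Rightarrow> int \<times> int" where
  "tw 0 = (1, 1)"
| "tw (Suc k) = (fst (tw k) + snd (tw k), snd (tw k) - fst (tw k))"

lemma clique:
  fixes E :: "'a::linorder \<Rightarrow> 'a \<Rightarrow> nat"
  assumes "finite C" "\<forall>a\<in>C. \<forall>b\<in>C. a \<noteq> b \<longrightarrow> E a b = 1" "\<And>a b. E a b = E b a"
  shows "((\<Sum>v\<in>Z2vecs C. (-1::int)^(R' E C v)), (\<Sum>v\<in>Z2vecs C. (-1::int)^(R' E C v + sum v C))) = tw (card C)"
  using assms(1,2)
proof (induction C rule: finite_induct)
  case empty
  then show ?case by (simp add: Z2_empty R'_def R_def)
next
  case (insert x C)
  have eR: "R' E (insert x C) v = R' E C v + (v x)^2 + v x + v x * sum v C" for v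
  proof -
    have "R E ({x} \<union> C) v = R E {x} v + R E C v + (\<Sum>b\<in>C. E x b * v x * v b)"
      using R_split[of "{x}" C E v] insert assms(3) by auto
    also have "(\<Sum>b\<in>C. E x b * v x * v b) = (\<Sum>b\<in>C. v x * v b)"
      using insert.prems insert.hyps(2) by (intro sum.cong) auto
    finally have "R E (insert x C) v = (v x)^2 + R E C v + v x * sum v C"
      by (simp add: R_single sum_distrib_left)
    then show ?thesis unfolding R'_def using insert.hyps by simp
  qed
  have IH: "((\<Sum>v\<in>Z2vecs C. (-1::int)^(R' E C v)), (\<Sum>v\<in>Z2vecs C. (-1::int)^(R' E C v + sum v C))) = tw (card C)"
    using insert by auto
  have loc1: "R' E C (v(x:=1)) = R' E C v" for v
    using insert.hyps(2) by (intro R'_local) auto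
  have loc2: "sum (v(x:=1)) C = sum v C" for v :: "'a \<Rightarrow> nat"
    using insert.hyps(2) by (intro sum.cong) auto
  have loc3: "sum (v(x:=1)) (insert x C) = 1 + sum v C" for v :: "'a \<Rightarrow> nat"
    using insert.hyps loc2 by simp
  have a: "(\<Sum>v\<in>Z2vecs (insert x C). (-1::int)^(R' E (insert x C) v)) =
     (\<Sum>v\<in>Z2vecs C. (-1::int)^(R' E C v)) + (\<Sum>v\<in>Z2vecs C. (-1::int)^(R' E C v + sum v C))"
  proof -
    have "(\<Sum>v\<in>Z2vecs (insert x C). (-1::int)^(R' E (insert x C) v)) =
       (\<Sum>v\<in>Z2vecs C. (-1::int)^(R' E (insert x C) v) + (-1::int)^(R' E (insert x C) (v(x:=1))))"
      using Z2_sum_insert[OF insert.hyps] by blast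
    also have "\<dots> = (\<Sum>v\<in>Z2vecs C. (-1::int)^(R' E C v) + (-1::int)^(R' E C v + sum v C))"
    proof (rule sum.cong)
      fix v assume v: "v \<in> Z2vecs C"
      have "v x = 0" using Z2_zero[OF v insert.hyps(2)] .
      then show "(-1::int)^(R' E (insert x C) v) + (-1::int)^(R' E (insert x C) (v(x:=1))) =
         (-1::int)^(R' E C v) + (-1::int)^(R' E C v + sum v C)"
        unfolding eR loc1 loc2 by (simp add: power_add)
    qed simp
    finally show ?thesis by (simp add: sum.distrib)
  qed
  have b: "(\<Sum>v\<in>Z2vecs (insert x C). (-1::int)^(R' E (insert x C) v + sum v (insert x C))) =
     (\<Sum>v\<in>Z2vecs C. (-1::int)^(R' E C v + sum v C)) - (\<Sum>v\<in>Z2vecs C. (-1::int)^(R' E C v))"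
  proof -
    have "(\<Sum>v\<in>Z2vecs (insert x C). (-1::int)^(R' E (insert x C) v + sum v (insert x C))) =
       (\<Sum>v\<in>Z2vecs C. (-1::int)^(R' E (insert x C) v + sum v (insert x C)) + (-1::int)^(R' E (insert x C) (v(x:=1)) + sum (v(x:=1)) (insert x C)))"
      using Z2_sum_insert[OF insert.hyps] by blast
    also have "\<dots> = (\<Sum>v\<in>Z2vecs C. (-1::int)^(R' E C v + sum v C) - (-1::int)^(R' E C v))"
    proof (rule sum.cong)
      fix v assume v: "v \<in> Z2vecs C"
      have "v x = 0" using Z2_zero[OF v insert.hyps(2)] .
      moreover have "R' E C v + (1 + 1 + sum v C) + (1 + sum v C) = R' E C v + 1 + 2 * (sum v C + 1)" by simp
      ultimately show "(-1::int)^(R' E (insert x C) v + sum v (insert x C)) + (-1::int)^(R' E (insert x C) (v(x:=1)) + sum (v(x:=1)) (insert x C)) =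
         (-1::int)^(R' E C v + sum v C) - (-1::int)^(R' E C v)"
        unfolding eR loc1 loc2 loc3 using insert.hyps by (simp add: power_add power_mult)
    qed simp
    finally show ?thesis by (simp add: sum_subtractf)
  qed
  show ?case using a b IH insert.hyps by (simp add: prod_eq_iff)
qed



lemma apex:
  fixes E :: "'a::linorder \<Rightarrow> 'a \<Rightarrow> nat"
  assumes "finite A'" "x \<notin> A'" "y \<notin> A'" "x \<noteq> y" "\<And>a b. E a b = E b a"
    "\<forall>b\<in>insert y A'. E x b = 1" "\<forall>b\<in>A'. E y b = 1"
  shows "(\<Sum>v\<in>Z2vecs (insert x (insert y A')). (-1::int)^(R E (insert x (insert y A')) v)) =
         -2 * (\<Sum>v\<in>Z2vecs A'. (-1::int)^(R' E A' v))"
proof -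
  have fy: "finite (insert y A')" using assms by auto
  have xy: "x \<notin> insert y A'" using assms by auto
  have eRy: "R E (insert y A') v = (v y)^2 + R E A' v + v y * sum v A'" for v
  proof -
    have "R E ({y} \<union> A') v = R E {y} v + R E A' v + (\<Sum>b\<in>A'. E y b * v y * v b)"
      using R_split[of "{y}" A' E v] assms by auto
    also have "(\<Sum>b\<in>A'. E y b * v y * v b) = (\<Sum>b\<in>A'. v y * v b)"
      using assms by (intro sum.cong) auto
    finally show ?thesis by (simp add: R_single sum_distrib_left)
  qed
  have eR: "R E (insert x (insert y A')) v = (v x)^2 + R E (insert y A') v + v x * (v y + sum v A')" for v
  proof -
    have "R E ({x} \<union> insert y A') v = R E {x} v + R E (insert y A') v + (\<Sum>b\<in>insert y A'. E x b * v x * v b)"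
      using R_split[of "{x}" "insert y A'" E v] assms fy xy by auto
    also have "(\<Sum>b\<in>insert y A'. E x b * v x * v b) = (\<Sum>b\<in>insert y A'. v x * v b)"
      using assms by (intro sum.cong) auto
    finally show ?thesis using assms by (simp add: R_single sum_distrib_left insert_commute distrib_left)
  qed
  have locR: "R E A' (v(y:=b, x:=a)) = R E A' v" for v :: "'a \<Rightarrow> nat" and a b
    using assms by (intro R_local) auto
  have locs: "sum (v(y:=b, x:=a)) A' = sum v A'" for v :: "'a \<Rightarrow> nat" and a b
    using assms by (intro sum.cong) auto
  have locR1: "R E A' (v(y:=b)) = R E A' v" for v :: "'a \<Rightarrow> nat" and b
    using assms by (intro R_local) auto
  have locs1: "sum (v(y:=b)) A' = sum v A'" for v :: "'a \<Rightarrow> nat" and b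
    using assms by (intro sum.cong) auto
  have locR2: "R E A' (v(x:=b)) = R E A' v" for v :: "'a \<Rightarrow> nat" and b
    using assms by (intro R_local) auto
  have locs2: "sum (v(x:=b)) A' = sum v A'" for v :: "'a \<Rightarrow> nat" and b
    using assms by (intro sum.cong) auto
  let ?f = "\<lambda>v. (-1::int)^(R E (insert x (insert y A')) v)"
  have "(\<Sum>v\<in>Z2vecs (insert x (insert y A')). ?f v) = (\<Sum>v\<in>Z2vecs (insert y A'). ?f v + ?f (v(x:=1)))"
    using Z2_sum_insert[OF fy xy] by blast
  also have "\<dots> = (\<Sum>v\<in>Z2vecs A'. (?f v + ?f (v(x:=1))) + (?f (v(y:=1)) + ?f (v(y:=1, x:=1))))"
    using Z2_sum_insert[OF assms(1,3), of "\<lambda>v. ?f v + ?f (v(x:=1))"] by blast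
  also have "\<dots> = (\<Sum>v\<in>Z2vecs A'. -2 * (-1::int)^(R' E A' v))"
  proof (rule sum.cong)
    fix v assume v: "v \<in> Z2vecs A'"
    have vx: "v x = 0" and vy: "v y = 0" using Z2_zero[OF v] assms by auto
    let ?r = "R E A' v" and ?s = "sum v A'"
    have f1: "?f v = (-1)^?r" using vx vy by (simp add: eR eRy)
    have f2: "?f (v(x:=1)) = - ((-1)^(?r + ?s))"
      unfolding eR eRy locR2 locs2 using vx vy assms by (simp add: power_add)
    have f3: "?f (v(y:=1)) = - ((-1)^(?r + ?s))"
      unfolding eR eRy locR1 locs1 using vx vy assms by (simp add: power_add)
    have "R E (insert x (insert y A')) (v(y:=1, x:=1)) = ?r + 1 + 2 * (?s + 1)"
      unfolding eR eRy locR locs using vx vy assms by simp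
    then have f4: "?f (v(y:=1, x:=1)) = - ((-1)^?r)"
      by (simp add: power_add power_mult)
    show "(?f v + ?f (v(x:=1))) + (?f (v(y:=1)) + ?f (v(y:=1, x:=1))) = -2 * (-1::int)^(R' E A' v)"
      unfolding f1 f2 f3 f4 R'_def by simp
  qed simp
  finally show ?thesis by (simp add: sum_distrib_left)
qed

lemma neg1_pow: "(-1::int)^k = 1 - 2 * (if k mod 2 = 1 then 1 else 0)"
  by (cases "even k") (auto elim: oddE)

lemma count_odd:
  assumes "finite Z"
  shows "2 * int (card {v\<in>Z. f v mod 2 = (1::nat)}) = int (card Z) - (\<Sum>v\<in>Z. (-1::int)^(f v))"
proof -
  have "(\<Sum>v\<in>Z. (-1::int)^(f v)) = (\<Sum>v\<in>Z. 1 - 2 * (if f v mod 2 = 1 then 1 else 0))"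
    by (simp add: neg1_pow)
  also have "\<dots> = int (card Z) - 2 * (\<Sum>v\<in>Z. (if f v mod 2 = 1 then 1 else 0))"
    by (simp add: sum_subtractf sum_distrib_left)
  also have "(\<Sum>v\<in>Z. (if f v mod 2 = 1 then 1 else 0::int)) = int (card {v\<in>Z. f v mod 2 = 1})"
    using assms by (simp add: sum.inter_filter[symmetric])
  finally show ?thesis by simp
qed



lemma find_block:
  fixes ks :: "nat list"
  assumes "ks \<noteq> []" "ks!0 \<le> x" "x < ks!(length ks - 1)"
  shows "\<exists>i\<in>{1..<length ks}. ks!(i-1) \<le> x \<and> x < ks!i"
proof -
  define P where "P i = (i < length ks \<and> x < ks!i)" for i
  have P1: "P (length ks - 1)" using assms unfolding P_def by auto
  define i where "i = (LEAST i. P i)"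
  have Pi: "P i" unfolding i_def using P1 by (rule LeastI)
  have i0: "i \<noteq> 0"
  proof
    assume "i = 0" then show False using Pi assms(2) unfolding P_def by auto
  qed
  have "\<not> P (i - 1)" unfolding i_def
    by (rule not_less_Least) (use i0 i_def in auto)
  then have "ks!(i-1) \<le> x" using Pi unfolding P_def by auto
  then show ?thesis using Pi i0 unfolding P_def by auto
qed

lemma tw_vals: "fst (tw 1) = 2" "fst (tw 2) = 2" "fst (tw 4) = -4" "fst (tw 5) = -8"
  by (simp_all add: eval_nat_numeral)

lemma Lp_sym: "Lp p0 p1 a b = Lp p0 p1 b a"
proof -
  have "(int (p0 a) - int (p0 b)) * (int (p1 a) - int (p1 b)) = (int (p0 b) - int (p0 a)) * (int (p1 b) - int (p1 a))"
    by (simp add: algebra_simps)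
  then show ?thesis unfolding Lp_def by simp
qed



theorem lemma4p9:
  fixes A :: "'a::linorder set" and p0 p1 :: "'a \<Rightarrow> nat" and ks :: "nat list"
    and N1 N2 N4 N5 :: nat
  assumes "por_cuts A p0 p1 ks"
    and "\<forall>i \<in> {1..<length ks}. ks ! i - ks ! (i - 1) \<in> {1, 2, 4, 5}"
    and "num_blocks ks 1 = N1" and "num_blocks ks 2 = N2"
    and "num_blocks ks 4 = N4" and "num_blocks ks 5 = N5"
  shows "int (ARF A p0 p1) = 2 ^ (N1 + 2*N2 + 4*N4 + 5*N5 + 1)
            + (-1) ^ (N4 + N5) * 2 ^ (N1 + N2 + 2*N4 + 3*N5)"
proof -
  define n where "n = card A"
  define I where "I = {1..<length ks}"
  define B where "B i = block A p0 ks i" for i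
  define d where "d i = ks ! i - ks ! (i - 1)" for i
  define E where "E = Lp p0 p1"
  have finA: "finite A" and n2: "n \<ge> 2" and bij0: "bij_betw p0 A {1..n}" and bij1: "bij_betw p1 A {1..n}"
    and st1: "inv_into A p0 1 = inv_into A p1 n" and st2: "inv_into A p1 1 = inv_into A p0 n"
    and ksne: "ks \<noteq> []" and hdk: "hd ks = 2" and lstk: "last ks = n" and srt: "sorted_wrt (<) ks"
    and blk: "\<forall>i\<in>I. block A p0 ks i = block A p1 ks i \<and>
        (\<forall>b\<in>block A p0 ks i. p0 b + p1 b = ks!(i-1) + ks!i - 1)"
    using assms(1) unfolding por_cuts_def is_standard_def is_pair_def n_def I_def by auto
  have k0: "ks!0 = 2" using ksne hdk by (simp add: hd_conv_nth)
  have kl: "ks!(length ks - 1) = n" using ksne lstk by (simp add: last_conv_nth)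
  have mono: "ks!i \<le> ks!j" if "i \<le> j" "j < length ks" for i j
  proof (cases "i = j")
    case False
    then have "i < j" using that by simp
    then show ?thesis using sorted_wrt_nth_less[OF srt _ that(2)] by fastforce
  qed simp
  have inj0: "inj_on p0 A" and inj1: "inj_on p1 A" using bij0 bij1 by (auto dest: bij_betw_imp_inj_on)
  have im0: "p0 ` A = {1..n}" and im1: "p1 ` A = {1..n}" using bij0 bij1 by (auto dest: bij_betw_imp_surj_on)
  have r0: "p0 a \<in> {1..n}" and r1: "p1 a \<in> {1..n}" if "a \<in> A" for a using that im0 im1 by auto
  define al where "al = inv_into A p0 1"
  define be where "be = inv_into A p0 n"
  have m: "1 \<in> p0 ` A" "n \<in> p0 ` A" "1 \<in> p1 ` A" "n \<in> p1 ` A" using im0 im1 n2 by auto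
  have alA: "al \<in> A" unfolding al_def by (rule inv_into_into[OF m(1)])
  have beA: "be \<in> A" unfolding be_def by (rule inv_into_into[OF m(2)])
  have p0al: "p0 al = 1" unfolding al_def by (rule f_inv_into_f[OF m(1)])
  have p0be: "p0 be = n" unfolding be_def by (rule f_inv_into_f[OF m(2)])
  have p1al: "p1 al = n" unfolding al_def st1 by (rule f_inv_into_f[OF m(4)])
  have p1be: "p1 be = 1" unfolding be_def st2[symmetric] by (rule f_inv_into_f[OF m(3)])
  have albe: "al \<noteq> be" using p0al p0be n2 by auto
  have Esym: "E a b = E b a" for a b unfolding E_def by (rule Lp_sym)
  have Eal: "E al b = 1" if "b \<in> A" "b \<noteq> al" for b
  proof -
    have "p0 b \<noteq> 1" using inj0 that alA p0al by (metis inj_onD)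
    then have "p0 b > 1" using r0[OF that(1)] by auto
    have "p1 b \<noteq> n" using inj1 that alA p1al by (metis inj_onD)
    then have "p1 b < n" using r1[OF that(1)] by auto
    have "(int (p0 al) - int (p0 b)) * (int (p1 al) - int (p1 b)) < 0"
      using \<open>p0 b > 1\<close> \<open>p1 b < n\<close> p0al p1al by (intro mult_neg_pos) auto
    then show ?thesis unfolding E_def Lp_def by simp
  qed
  have Ebe: "E be b = 1" if "b \<in> A" "b \<noteq> be" for b
  proof -
    have "p0 b \<noteq> n" using inj0 that beA p0be by (metis inj_onD)
    then have "p0 b < n" using r0[OF that(1)] by auto
    have "p1 b \<noteq> 1" using inj1 that beA p1be by (metis inj_onD)
    then have "p1 b > 1" using r1[OF that(1)] by auto
    have "(int (p0 be) - int (p0 b)) * (int (p1 be) - int (p1 b)) < 0"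
      using \<open>p0 b < n\<close> \<open>p1 b > 1\<close> p0be p1be by (intro mult_pos_neg) auto
    then show ?thesis unfolding E_def Lp_def by simp
  qed
  have BA: "B i \<subseteq> A" for i unfolding B_def block_def by auto
  have Br0: "ks!(i-1) \<le> p0 a \<and> p0 a < ks!i" if "i \<in> I" "a \<in> B i" for i a
    using that unfolding B_def block_def by auto
  have Br1: "ks!(i-1) \<le> p1 a \<and> p1 a < ks!i" if "i \<in> I" "a \<in> B i" for i a
    using that blk unfolding B_def block_def by auto
  have Bsum: "p0 a + p1 a = ks!(i-1) + ks!i - 1" if "i \<in> I" "a \<in> B i" for i a
    using that blk unfolding B_def by auto
  have Bb: "2 \<le> p0 a \<and> p0 a < n" if "i \<in> I" "a \<in> B i" for i a
  proof -
    have "ks!0 \<le> ks!(i-1)" "ks!i \<le> ks!(length ks - 1)" using that(1) unfolding I_def by (auto intro!: mono)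
    then show ?thesis using Br0[OF that] k0 kl by auto
  qed
  have Bord: "p0 a < p0 b \<and> p1 a < p1 b" if "i \<in> I" "j \<in> I" "i < j" "a \<in> B i" "b \<in> B j" for i j a b
  proof -
    have "ks!i \<le> ks!(j-1)" using that(2,3) unfolding I_def by (auto intro!: mono)
    then show ?thesis using Br0[OF that(1,4)] Br0[OF that(2,5)] Br1[OF that(1,4)] Br1[OF that(2,5)] by auto
  qed
  have Bdisj: "B i \<inter> B j = {}" if "i \<in> I" "j \<in> I" "i \<noteq> j" for i j
  proof (cases "i < j")
    case True then show ?thesis using Bord[OF that(1,2) True] by fastforce
  next
    case False then have "j < i" using that by auto
    then show ?thesis using Bord[OF that(2,1)] by fastforce
  qed
  have Ediff: "E a b = 0" if "i \<in> I" "j \<in> I" "i \<noteq> j" "a \<in> B i" "b \<in> B j" for i j a b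
  proof (cases "i < j")
    case True
    then have "p0 a < p0 b \<and> p1 a < p1 b" using Bord that by blast
    then have "(int (p0 a) - int (p0 b)) * (int (p1 a) - int (p1 b)) > 0" by (intro mult_neg_neg) auto
    then show ?thesis unfolding E_def Lp_def by simp
  next
    case False then have "j < i" using that by auto
    then have "p0 b < p0 a \<and> p1 b < p1 a" using Bord that by blast
    then have "(int (p0 a) - int (p0 b)) * (int (p1 a) - int (p1 b)) > 0" by (intro mult_pos_pos) auto
    then show ?thesis unfolding E_def Lp_def by simp
  qed
  have Esame: "E a b = 1" if "i \<in> I" "a \<in> B i" "b \<in> B i" "a \<noteq> b" for i a b
  proof -
    define t where "t = int (p0 a) - int (p0 b)"
    have "p0 a \<noteq> p0 b" using inj0 that BA by (metis inj_onD subsetD)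
    then have t0: "t \<noteq> 0" unfolding t_def by simp
    have hu: "int (p1 a) - int (p1 b) = - t" using Bsum[OF that(1,2)] Bsum[OF that(1,3)] unfolding t_def by linarith
    have "(int (p0 a) - int (p0 b)) * (int (p1 a) - int (p1 b)) = t * (- t)" by (simp only: t_def[symmetric] hu)
    then have "(int (p0 a) - int (p0 b)) * (int (p1 a) - int (p1 b)) = - (t * t)" by simp
    moreover have "t * t > 0" using t0 by (auto simp: zero_less_mult_iff linorder_neq_iff)
    ultimately show ?thesis unfolding E_def Lp_def by simp
  qed
  define A' where "A' = (\<Union>i\<in>I. B i)"
  have cover: "A = insert al (insert be A')"
  proof
    show "insert al (insert be A') \<subseteq> A" using alA beA BA unfolding A'_def by auto
    show "A \<subseteq> insert al (insert be A')"
    proof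
      fix a assume aA: "a \<in> A"
      show "a \<in> insert al (insert be A')"
      proof (cases "a = al \<or> a = be")
        case False
        have "p0 a \<noteq> 1" using False inj0 aA alA p0al by (metis inj_onD)
        moreover have "p0 a \<noteq> n" using False inj0 aA beA p0be by (metis inj_onD)
        ultimately have "ks!0 \<le> p0 a" "p0 a < ks!(length ks - 1)" using r0[OF aA] k0 kl by auto
        then obtain i where "i \<in> I" "ks!(i-1) \<le> p0 a \<and> p0 a < ks!i"
          using find_block[OF ksne] unfolding I_def by blast
        then have "a \<in> B i" using aA unfolding B_def block_def by auto
        then show ?thesis using \<open>i \<in> I\<close> unfolding A'_def by auto
      qed auto
    qed
  qed
  have alA': "al \<notin> A'" and beA': "be \<notin> A'" using Bb p0al p0be n2 unfolding A'_def by fastforce+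
  have finI: "finite I" unfolding I_def by simp
  have finB: "\<forall>i\<in>I. finite (B i)" using BA finA finite_subset by blast
  have finA': "finite A'" unfolding A'_def using finI finB by auto
  have cardB: "card (B i) = d i" if "i \<in> I" for i
  proof -
    have "ks!0 \<le> ks!(i-1)" "ks!i \<le> ks!(length ks - 1)" using that unfolding I_def by (auto intro!: mono)
    then have sub: "{ks!(i-1)..<ks!i} \<subseteq> {1..n}" using k0 kl by auto
    have "p0 ` B i = {ks!(i-1)..<ks!i}"
    proof
      show "p0 ` B i \<subseteq> {ks!(i-1)..<ks!i}" using Br0[OF that] by auto
      show "{ks!(i-1)..<ks!i} \<subseteq> p0 ` B i"
      proof
        fix x assume x: "x \<in> {ks!(i-1)..<ks!i}"
        then obtain a where "a \<in> A" "x = p0 a" using sub im0 by (metis imageE subsetD)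
        then show "x \<in> p0 ` B i" using x unfolding B_def block_def by auto
      qed
    qed
    moreover have "inj_on p0 (B i)" using inj0 BA by (rule inj_on_subset)
    ultimately have "card (B i) = card {ks!(i-1)..<ks!i}" by (metis card_image)
    then show ?thesis unfolding d_def by simp
  qed
  have S1: "(\<Sum>v\<in>Z2vecs A. (-1::int)^(R E A v)) = -2 * (\<Sum>v\<in>Z2vecs A'. (-1::int)^(R' E A' v))"
    unfolding cover
  proof (rule apex[OF finA' alA' beA' albe Esym])
    show "\<forall>b\<in>insert be A'. E al b = 1" using Eal cover albe alA' by auto
    show "\<forall>b\<in>A'. E be b = 1" using Ebe cover beA' by auto
  qed
  have h1: "\<forall>i\<in>I. \<forall>j\<in>I. i \<noteq> j \<longrightarrow> B i \<inter> B j = {}" using Bdisj by blast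
  have h2: "\<forall>i\<in>I. \<forall>j\<in>I. i \<noteq> j \<longrightarrow> (\<forall>a\<in>B i. \<forall>b\<in>B j. E a b = 0)" using Ediff by blast
  have S2: "(\<Sum>v\<in>Z2vecs A'. (-1::int)^(R' E A' v)) = (\<Prod>i\<in>I. \<Sum>v\<in>Z2vecs (B i). (-1::int)^(R' E (B i) v))"
    unfolding A'_def by (rule blocks_prod[OF finI finB h1 h2 Esym])
  have S3: "(\<Sum>v\<in>Z2vecs (B i). (-1::int)^(R' E (B i) v)) = fst (tw (d i))" if "i \<in> I" for i
  proof -
    have "\<forall>a\<in>B i. \<forall>b\<in>B i. a \<noteq> b \<longrightarrow> E a b = 1" using Esame that by blast
    from clique[OF _ this Esym] finB that cardB show ?thesis by (metis fst_conv)
  qed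
  have Sfin: "(\<Sum>v\<in>Z2vecs A. (-1::int)^(R E A v)) = -2 * (\<Prod>i\<in>I. fst (tw (d i)))"
    using S1 S2 S3 by simp
  have ARFeq: "ARF A p0 p1 = card {v\<in>Z2vecs A. R E A v mod 2 = 1}"
    unfolding ARF_def Qp_def R_def E_def by simp
  have cardZ: "card (Z2vecs A) = 2 ^ n" using Z2_card[OF finA] n_def by simp
  have main: "2 * int (ARF A p0 p1) = 2 ^ n + 2 * (\<Prod>i\<in>I. fst (tw (d i)))"
    using count_odd[OF Z2_finite[OF finA], of "R E A"] ARFeq cardZ Sfin by simp
  have dI: "d ` I \<subseteq> {1,2,4,5}" using assms(2) unfolding d_def I_def by auto
  have Nk: "card {i\<in>I. d i = k} = num_blocks ks k" for k
    unfolding num_blocks_def d_def I_def by simp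
  have cardA': "card A' = (\<Sum>i\<in>I. d i)"
    unfolding A'_def using card_UN_disjoint[OF finI finB] Bdisj cardB by simp
  have nsum: "n = 2 + (\<Sum>i\<in>I. d i)"
    using cover alA' beA' albe finA' cardA' unfolding n_def by simp
  have "(\<Sum>i\<in>I. d i) = (\<Sum>k\<in>{1,2,4,5}. \<Sum>i\<in>{i\<in>I. d i = k}. d i)"
    using sum.group[OF finI _ dI, of d] by simp
  also have "\<dots> = (\<Sum>k\<in>{1,2,4,5}. k * card {i\<in>I. d i = k})"
    by (intro sum.cong refl) simp
  finally have dsum: "(\<Sum>i\<in>I. d i) = N1 + 2*N2 + 4*N4 + 5*N5"
    using Nk assms(3-6) by simp
  have "(\<Prod>i\<in>I. fst (tw (d i))) = (\<Prod>k\<in>{1,2,4,5}. \<Prod>i\<in>{i\<in>I. d i = k}. fst (tw (d i)))"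
    using prod.group[OF finI _ dI, of "\<lambda>i. fst (tw (d i))"] by simp
  also have "\<dots> = (\<Prod>k\<in>{1,2,4,5}. fst (tw k) ^ card {i\<in>I. d i = k})"
    by (intro prod.cong refl) simp
  finally have dprod: "(\<Prod>i\<in>I. fst (tw (d i))) = 2^N1 * 2^N2 * (-4)^N4 * (-8)^N5"
    using Nk assms(3-6) tw_vals by simp
  have p4: "(-4::int)^N4 = (-1)^N4 * 2^(2*N4)"
    by (simp add: power_mult power_mult_distrib[symmetric])
  have p8: "(-8::int)^N5 = (-1)^N5 * 2^(3*N5)"
    by (simp add: power_mult power_mult_distrib[symmetric])
  have "2 * int (ARF A p0 p1) = 2 * (2 ^ (N1 + 2*N2 + 4*N4 + 5*N5 + 1)
            + (-1) ^ (N4 + N5) * 2 ^ (N1 + N2 + 2*N4 + 3*N5))"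
    unfolding main nsum dsum dprod p4 p8 by (simp add: power_add algebra_simps)
  then show ?thesis by simp
qed


end
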